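(* Assume $\mu$ satisfies $(\mathrm H_\mu)$ and let $h_n$ be as in the context. Then $h_n/\ln n\to\infty$ as $n\to\infty$. Moreover, with $b_n$ and $V$ as in the context, $b_n V(b_n)=O(n\ln n)$.
   Context: Condition $(\mathrm H_\mu)$: $\mu=(\mu_k)_{k\ge0}$ is a probability measure on $\mathbb Z_+$ with $\sum_k k\mu_k=1$, and there is a slowly varying function $L:\mathbb R_+\to\mathbb R_+$ with $\mu_n=L(n)/n^2$ for all $n\ge1$. Let $Y\sim\mu$, $X=Y-1$, $(a_n)$ a sequence with $n\mathbf P(Y\ge a_n)\to1$, $b_n=n\mathbf E[X\mathbf 1_{\{|X|>a_n\}}]$, $h_n=\int_1^{n\mathbf E[Y\mathbf 1_{\{Y\ge a_n\}}]}\frac{\mathrm dx}{x\mathbf E[Y\mathbf 1_{\{Y\ge x\}}]}$. With $G_\mu(s)=\sum_k\mu_ks^k$, $\ell_\star(x)=x\big(G_\mu(1-1/x)-1+1/x\big)$ for $x\ge1$, and $V(y)=\int_1^y\frac{\mathrm dx}{x\ell_\star(x)}$. *)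

theory Defs
  imports "HOL-Analysis.Analysis" "HOL-Library.Landau_Symbols"
begin

definition slowly_varying :: "(real \<Rightarrow> real) \<Rightarrow> bool" where
  "slowly_varying L \<longleftrightarrow>
     L \<in> borel_measurable borel \<and> (\<forall>x>0. L x > 0) \<and>
     (\<forall>c>0. ((\<lambda>x. L (c * x) / L x) \<longlongrightarrow> 1) at_top)"

definition H_mu :: "(nat \<Rightarrow> real) \<Rightarrow> bool" where
  "H_mu mu \<longleftrightarrow>
     (\<forall>k. mu k \<ge> 0) \<and> mu sums 1 \<and> (\<lambda>k. real k * mu k) sums 1 \<and>
     (\<exists>L. slowly_varying L \<and> (\<forall>n\<ge>1. mu n = L (real n) / (real n)^2))"

definition tailP :: "(nat \<Rightarrow> real) \<Rightarrow> real \<Rightarrow> real" where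
  "tailP mu x = (\<Sum>k. if x \<le> real k then mu k else 0)"

definition tailE :: "(nat \<Rightarrow> real) \<Rightarrow> real \<Rightarrow> real" where
  "tailE mu x = (\<Sum>k. if x \<le> real k then real k * mu k else 0)"

definition bseq :: "(nat \<Rightarrow> real) \<Rightarrow> (nat \<Rightarrow> real) \<Rightarrow> nat \<Rightarrow> real" where
  "bseq mu a n = real n * (\<Sum>k. if \<bar>real k - 1\<bar> > a n then (real k - 1) * mu k else 0)"

definition hseq :: "(nat \<Rightarrow> real) \<Rightarrow> (nat \<Rightarrow> real) \<Rightarrow> nat \<Rightarrow> real" where
  "hseq mu a n = integral {1 .. real n * tailE mu (a n)} (\<lambda>x. 1 / (x * tailE mu x))"

definition Gmu :: "(nat \<Rightarrow> real) \<Rightarrow> real \<Rightarrow> real" where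
  "Gmu mu s = (\<Sum>k. mu k * s ^ k)"

definition lstar :: "(nat \<Rightarrow> real) \<Rightarrow> real \<Rightarrow> real" where
  "lstar mu x = x * (Gmu mu (1 - 1 / x) - 1 + 1 / x)"

definition Vfun :: "(nat \<Rightarrow> real) \<Rightarrow> real \<Rightarrow> real" where
  "Vfun mu y = integral {1 .. y} (\<lambda>x. 1 / (x * lstar mu x))"

end

theory Submission
  imports Defs "HOL-Real_Asymp.Real_Asymp"
begin


lemma uct_additive:
  fixes h :: "real \<Rightarrow> real"
  assumes meas: "h \<in> borel_measurable borel"
    and lim: "\<And>u. ((\<lambda>x. h (x + u) - h x) \<longlongrightarrow> 0) at_top"
    and eps: "e > 0"
  shows "\<exists>X. \<forall>x\<ge>X. \<forall>u\<in>{0..1}. \<bar>h (x + u) - h x\<bar> \<le> e"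
proof (rule ccontr)
  assume "\<not> ?thesis"
  hence "\<forall>n::nat. \<exists>x\<ge>real n. \<exists>u\<in>{0..1}. \<bar>h (x + u) - h x\<bar> > e"
    by (meson not_le)
  then obtain xs us where xs: "\<And>n. xs n \<ge> real n" and us: "\<And>n. us n \<in> {0..1}"
    and big: "\<And>n. \<bar>h (xs n + us n) - h (xs n)\<bar> > e"
    by metis
  define ys where "ys n = xs n + us n" for n
  have xs_lim: "filterlim xs at_top sequentially"
    by (rule filterlim_at_top_mono[OF filterlim_real_sequentially]) (use xs in auto)
  have ys_lim: "filterlim ys at_top sequentially"
  proof (rule filterlim_at_top_mono[OF filterlim_real_sequentially])
    have "real n \<le> ys n" for n using xs[of n] us[of n] by (simp add: ys_def)
    thus "\<forall>\<^sub>F n in sequentially. real n \<le> ys n" by simp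
  qed
  define U where "U N = {v\<in>{0..2}. \<forall>m\<ge>N. \<bar>h (xs m + v) - h (xs m)\<bar> < e/2}" for N
  define V where "V N = {v\<in>{0..2}. \<forall>m\<ge>N. \<bar>h (ys m + v) - h (ys m)\<bar> < e/2}" for N
  have Umeas: "U N \<in> sets lborel" for N
  proof -
    have "U N = {0..2} \<inter> (\<Inter>m\<in>{N..}. {v. \<bar>h (xs m + v) - h (xs m)\<bar> < e/2})"
      by (auto simp: U_def)
    also have "\<dots> \<in> sets lborel"
      using meas by measurable
    finally show ?thesis .
  qed
  have Vmeas: "V N \<in> sets lborel" for N
  proof -
    have "V N = {0..2} \<inter> (\<Inter>m\<in>{N..}. {v. \<bar>h (ys m + v) - h (ys m)\<bar> < e/2})"
      by (auto simp: V_def)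
    also have "\<dots> \<in> sets lborel"
      using meas by measurable
    finally show ?thesis .
  qed
  have cover: "(\<Union>N. W N) = {0..2}"
    if W: "\<And>N. W N = {v\<in>{0..2}. \<forall>m\<ge>N. \<bar>h (zs m + v) - h (zs m)\<bar> < e/2}"
      and zl: "filterlim zs at_top sequentially" for W zs
  proof
    show "(\<Union>N. W N) \<subseteq> {0..2}" using W by auto
    show "{0..2} \<subseteq> (\<Union>N. W N)"
    proof
      fix v :: real assume v: "v \<in> {0..2}"
      have "((\<lambda>m. h (zs m + v) - h (zs m)) \<longlongrightarrow> 0) sequentially"
        using filterlim_compose[OF lim[of v] zl] by simp
      hence "eventually (\<lambda>m. \<bar>h (zs m + v) - h (zs m)\<bar> < e/2) sequentially"
        using eps by (auto dest!: tendstoD[where e="e/2"])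
      then obtain N where "\<forall>m\<ge>N. \<bar>h (zs m + v) - h (zs m)\<bar> < e/2"
        by (auto simp: eventually_sequentially)
      thus "v \<in> (\<Union>N. W N)" using v W by auto
    qed
  qed
  have incU: "incseq U" by (auto simp: incseq_def U_def)
  have incV: "incseq V" by (auto simp: incseq_def V_def)
  have limU: "(\<lambda>N. emeasure lborel (U N)) \<longlonglongrightarrow> 2"
    using Lim_emeasure_incseq[of U lborel] Umeas incU cover[OF U_def xs_lim] by auto
  have limV: "(\<lambda>N. emeasure lborel (V N)) \<longlonglongrightarrow> 2"
    using Lim_emeasure_incseq[of V lborel] Vmeas incV cover[OF V_def ys_lim] by auto
  have lt: "ennreal (3/2) < 2" by (simp add: ennreal_less_iff)
  obtain N where UN: "emeasure lborel (U N) > ennreal (3/2)" and VN: "emeasure lborel (V N) > ennreal (3/2)"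
    using eventually_conj[OF order_tendstoD(1)[OF limU lt] order_tendstoD(1)[OF limV lt]]
    by (auto simp: eventually_sequentially)
  define V' where "V' = (+) (- us N) -` V N"
  have V'meas: "V' \<in> sets lborel"
  proof -
    have m: "(+) (- us N) \<in> measurable lborel lborel" by simp
    have "V' = (+) (- us N) -` V N \<inter> space lborel" by (simp add: V'_def)
    thus ?thesis using measurable_sets[OF m Vmeas] by simp
  qed
  have "emeasure lborel V' = emeasure (distr lborel borel ((+) (- us N))) (V N)"
    using Vmeas by (simp add: emeasure_distr V'_def)
  also have "\<dots> = emeasure lborel (V N)" by (simp add: lborel_distr_plus)
  finally have V'eq: "emeasure lborel V' = emeasure lborel (V N)" .
  have "U N \<inter> V' \<noteq> {}"
  proof
    assume disj: "U N \<inter> V' = {}"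
    have sub: "U N \<union> V' \<subseteq> {0..3}"
      using us[of N] by (auto simp: U_def V'_def V_def)
    have "ennreal (3/2) + ennreal (3/2) < ennreal (3/2) + emeasure lborel V'"
      using VN V'eq by (simp add: ennreal_add_left_cancel_less)
    also have "\<dots> \<le> emeasure lborel (U N) + emeasure lborel V'"
      using UN by (intro add_right_mono) simp
    also have "\<dots> = emeasure lborel (U N \<union> V')"
      by (rule plus_emeasure[OF Umeas V'meas disj])
    also have "\<dots> \<le> emeasure lborel {0..3::real}"
      by (rule emeasure_mono[OF sub]) simp
    also have "\<dots> = ennreal 3" by simp
    finally show False by (simp add: ennreal_plus[symmetric] del: ennreal_plus)
  qed
  then obtain w where wU: "w \<in> U N" and wV: "w \<in> V'" by blast
  have 1: "\<bar>h (xs N + w) - h (xs N)\<bar> < e/2" using wU by (auto simp: U_def)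
  have 2: "\<bar>h (ys N + (w - us N)) - h (ys N)\<bar> < e/2" using wV by (auto simp: V'_def V_def)
  have "ys N + (w - us N) = xs N + w" by (simp add: ys_def)
  with 2 have 3: "\<bar>h (xs N + w) - h (xs N + us N)\<bar> < e/2" by (simp add: ys_def)
  from 1 3 big[of N] abs_triangle_ineq[of "h (xs N + us N) - h (xs N + w)" "h (xs N + w) - h (xs N)"] abs_minus_commute[of "h (xs N + w)" "h (xs N + us N)"] show False by simp
qed


locale crit =
  fixes mu :: "nat \<Rightarrow> real" and L :: "real \<Rightarrow> real"
  assumes nonneg: "\<And>k. mu k \<ge> 0" and s1: "mu sums 1" and s2: "(\<lambda>k. real k * mu k) sums 1"
    and sv: "slowly_varying L" and muL: "\<And>n. n \<ge> 1 \<Longrightarrow> mu n = L (real n) / (real n)^2"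
begin

lemma Lpos: "x > 0 \<Longrightarrow> L x > 0" using sv by (auto simp: slowly_varying_def)
lemma Lmeas: "L \<in> borel_measurable borel" using sv by (auto simp: slowly_varying_def)
lemma Llim: "c > 0 \<Longrightarrow> ((\<lambda>x. L (c * x) / L x) \<longlongrightarrow> 1) at_top" using sv by (auto simp: slowly_varying_def)

lemma mupos: "n \<ge> 1 \<Longrightarrow> mu n > 0" using muL[of n] Lpos[of "real n"] by simp

lemma summu: "summable mu" using s1 by (simp add: sums_iff)
lemma sumf: "summable (\<lambda>k. real k * mu k)" using s2 by (simp add: sums_iff)

lemma kmu: "n \<ge> 1 \<Longrightarrow> real n * mu n = L (real n) / real n"
  using muL[of n] by (simp add: power2_eq_square)

lemma sumE: "summable (\<lambda>k. if x \<le> real k then real k * mu k else 0)"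
  by (rule summable_comparison_test[OF _ sumf]) (auto simp: nonneg)
lemma sumP: "summable (\<lambda>k. if x \<le> real k then mu k else 0)"
  by (rule summable_comparison_test[OF _ summu]) (auto simp: nonneg)

lemma E_anti: "x \<le> y \<Longrightarrow> tailE mu y \<le> tailE mu x"
  unfolding tailE_def by (rule suminf_le[OF _ sumE sumE]) (auto simp: nonneg)
lemma P_anti: "x \<le> y \<Longrightarrow> tailP mu y \<le> tailP mu x"
  unfolding tailP_def by (rule suminf_le[OF _ sumP sumP]) (auto simp: nonneg)

lemma E_ge_sum: "finite A \<Longrightarrow> (\<And>k. k \<in> A \<Longrightarrow> x \<le> real k) \<Longrightarrow> (\<Sum>k\<in>A. real k * mu k) \<le> tailE mu x"
proof -
  assume A: "finite A" "\<And>k. k \<in> A \<Longrightarrow> x \<le> real k"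
  have "(\<Sum>k\<in>A. real k * mu k) = (\<Sum>k\<in>A. if x \<le> real k then real k * mu k else 0)"
    using A by (intro sum.cong) auto
  also have "\<dots> \<le> tailE mu x" unfolding tailE_def
    by (rule sum_le_suminf[OF sumE A(1)]) (auto simp: nonneg)
  finally show ?thesis .
qed

lemma P_ge_sum: "finite A \<Longrightarrow> (\<And>k. k \<in> A \<Longrightarrow> x \<le> real k) \<Longrightarrow> (\<Sum>k\<in>A. mu k) \<le> tailP mu x"
proof -
  assume A: "finite A" "\<And>k. k \<in> A \<Longrightarrow> x \<le> real k"
  have "(\<Sum>k\<in>A. mu k) = (\<Sum>k\<in>A. if x \<le> real k then mu k else 0)"
    using A by (intro sum.cong) auto
  also have "\<dots> \<le> tailP mu x" unfolding tailP_def
    by (rule sum_le_suminf[OF sumP A(1)]) (auto simp: nonneg)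
  finally show ?thesis .
qed

lemma E_pos: "tailE mu x > 0"
proof -
  define k where "k = max 1 (nat \<lceil>x\<rceil>)"
  have "x \<le> real k" unfolding k_def by linarith
  hence "(\<Sum>j\<in>{k}. real j * mu j) \<le> tailE mu x" by (intro E_ge_sum) auto
  moreover have "real k * mu k > 0" using mupos[of k] by (simp add: k_def)
  ultimately show ?thesis by simp
qed

lemma P_pos: "tailP mu x > 0"
proof -
  define k where "k = max 1 (nat \<lceil>x\<rceil>)"
  have "x \<le> real k" unfolding k_def by linarith
  hence "(\<Sum>j\<in>{k}. mu j) \<le> tailP mu x" by (intro P_ge_sum) auto
  moreover have "mu k > 0" using mupos[of k] by (simp add: k_def)
  ultimately show ?thesis by simp
qed

lemma E_le1: "tailE mu x \<le> 1"
proof -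
  have "tailE mu x \<le> (\<Sum>k. real k * mu k)" unfolding tailE_def
    by (rule suminf_le[OF _ sumE sumf]) (auto simp: nonneg)
  thus ?thesis using s2 by (simp add: sums_iff)
qed

lemma E_ge_xP: "x \<ge> 0 \<Longrightarrow> x * tailP mu x \<le> tailE mu x"
proof -
  assume x: "x \<ge> 0"
  have "x * tailP mu x = (\<Sum>k. x * (if x \<le> real k then mu k else 0))"
    unfolding tailP_def by (rule suminf_mult[OF sumP, symmetric])
  also have "\<dots> \<le> tailE mu x" unfolding tailE_def
    by (rule suminf_le) (auto intro!: summable_mult sumP sumE mult_right_mono nonneg)
  finally show ?thesis .
qed

lemma E_split: "p \<le> q \<Longrightarrow> tailE mu (real p) = (\<Sum>k\<in>{p..<q}. real k * mu k) + tailE mu (real q)"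
proof -
  assume pq: "p \<le> q"
  have "tailE mu (real p) - tailE mu (real q) =
      (\<Sum>k. (if real p \<le> real k then real k * mu k else 0) - (if real q \<le> real k then real k * mu k else 0))"
    unfolding tailE_def by (rule suminf_diff[OF sumE sumE])
  also have "\<dots> = (\<Sum>k\<in>{p..<q}. (if real p \<le> real k then real k * mu k else 0) - (if real q \<le> real k then real k * mu k else 0))"
    by (rule suminf_finite) (use pq in auto)
  also have "\<dots> = (\<Sum>k\<in>{p..<q}. real k * mu k)"
    by (intro sum.cong) auto
  finally show ?thesis by simp
qed

lemma E_lim0: "(tailE mu \<longlongrightarrow> 0) at_top"
proof (rule tendstoI)
  fix r :: real assume r: "r > 0"
  obtain N where N: "\<forall>n\<ge>N. norm (\<Sum>i. real (i + n) * mu (i + n)) < r"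
    using suminf_exist_split[OF r sumf] by auto
  have "tailE mu x < r" if x: "x \<ge> real N" for x
  proof -
    have "tailE mu x \<le> tailE mu (real N)" by (rule E_anti[OF x])
    also have "tailE mu (real N) = (\<Sum>i. real (i + N) * mu (i + N))"
    proof -
      have "(\<lambda>k. if real N \<le> real k then real k * mu k else 0) sums tailE mu (real N)"
        unfolding tailE_def by (rule summable_sums[OF sumE])
      hence "(\<lambda>i. if real N \<le> real (i + N) then real (i + N) * mu (i + N) else 0) sums
          (tailE mu (real N) - (\<Sum>i<N. if real N \<le> real i then real i * mu i else 0))"
        by (rule sums_split_initial_segment)
      moreover have "(\<Sum>i<N. if real N \<le> real i then real i * mu i else 0) = 0" by simp
      ultimately have "(\<lambda>i. real (i + N) * mu (i + N)) sums tailE mu (real N)" by simp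
      thus ?thesis by (simp add: sums_iff)
    qed
    also have "\<dots> < r" using N by auto
    finally show ?thesis .
  qed
  hence "eventually (\<lambda>x. tailE mu x < r) at_top" by (auto simp: eventually_at_top_linorder)
  thus "eventually (\<lambda>x. dist (tailE mu x) 0 < r) at_top"
    by eventually_elim (use E_pos in \<open>auto simp: dist_real_def less_imp_le\<close>)
qed

end

context crit begin

lemma pow2_lim: "filterlim (\<lambda>i::nat. (2::real)^i) at_top sequentially"
  by real_asymp

lemma ratio_lim: "((\<lambda>i. L (2^(i+t)) / L (2^i)) \<longlongrightarrow> 1) sequentially"
proof -
  have "((\<lambda>i. L ((2::real)^t * 2^i) / L (2^i)) \<longlongrightarrow> 1) sequentially"
    using filterlim_compose[OF Llim[of "2^t"] pow2_lim] by simp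
  thus ?thesis by (simp add: power_add mult.commute)
qed

definition rho :: real where "rho = 2 powr (1/4)"
lemma rho_gt1: "rho > 1" by (simp add: rho_def)

lemma onestep: "\<exists>J. \<forall>j\<ge>J. L (2^(j+1)) \<le> rho * L (2^j) \<and> L (2^j) \<le> rho * L (2^(j+1))"
proof -
  have r1: "1/rho < 1" using rho_gt1 by simp
  have ev: "eventually (\<lambda>i. 1/rho < L (2^(i+1)) / L (2^i) \<and> L (2^(i+1)) / L (2^i) < rho) sequentially"
    using order_tendstoD(1)[OF ratio_lim[of 1] r1] order_tendstoD(2)[OF ratio_lim[of 1] rho_gt1]
    by (auto elim: eventually_conj)
  then obtain J where J: "\<And>j. j \<ge> J \<Longrightarrow> 1/rho < L (2^(j+1)) / L (2^j) \<and> L (2^(j+1)) / L (2^j) < rho"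
    by (auto simp: eventually_sequentially)
  have "L (2^(j+1)) \<le> rho * L (2^j) \<and> L (2^j) \<le> rho * L (2^(j+1))" if "j \<ge> J" for j
  proof -
    have p1: "L (2^j) > 0" "L (2^(j+1)) > 0" by (auto intro!: Lpos)
    from J[OF that] p1 rho_gt1 show ?thesis
      by (auto simp: field_simps)
  qed
  thus ?thesis by blast
qed

lemma growth:
  assumes J: "\<forall>j\<ge>J. L (2^(j+1)) \<le> rho * L (2^j) \<and> L (2^j) \<le> rho * L (2^(j+1))"
    and i: "i \<ge> J"
  shows "L (2^(i+t)) \<le> rho^t * L (2^i) \<and> L (2^i) \<le> rho^t * L (2^(i+t))"
proof (induction t)
  case 0 thus ?case by simp
next
  case (Suc t)
  have a: "L (2^(i+t+1)) \<le> rho * L (2^(i+t))" "L (2^(i+t)) \<le> rho * L (2^(i+t+1))"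
    using J i by auto
  have r: "rho > 0" using rho_gt1 by simp
  have "L (2^(i+Suc t)) \<le> rho * L (2^(i+t))" using a by simp
  also have "\<dots> \<le> rho * (rho^t * L (2^i))" using Suc r by (intro mult_left_mono) auto
  finally have 1: "L (2^(i+Suc t)) \<le> rho^(Suc t) * L (2^i)" by (simp add: mult.assoc)
  have "L (2^i) \<le> rho^t * L (2^(i+t))" using Suc by simp
  also have "\<dots> \<le> rho^t * (rho * L (2^(i+t+1)))" using a r by (intro mult_left_mono) auto
  finally have 2: "L (2^i) \<le> rho^(Suc t) * L (2^(i+Suc t))" by (simp add: mult_ac)
  from 1 2 show ?case ..
qed

lemma block_bound:
  "\<exists>J. \<forall>j\<ge>J. \<forall>k::nat. 2^j \<le> k \<and> k \<le> 2^(j+1) \<longrightarrow> L (2^j) / 2 \<le> L (real k) \<and> L (real k) \<le> 2 * L (2^j)"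
proof -
  define h where "h t = ln (L (exp t))" for t
  have hm: "h \<in> borel_measurable borel"
    unfolding h_def using Lmeas by measurable
  have hl: "((\<lambda>x. h (x + u) - h x) \<longlongrightarrow> 0) at_top" for u
  proof -
    have "((\<lambda>x. L (exp u * exp x) / L (exp x)) \<longlongrightarrow> 1) at_top"
      using filterlim_compose[OF Llim[of "exp u"] exp_at_top] by simp
    hence "((\<lambda>x. ln (L (exp u * exp x) / L (exp x))) \<longlongrightarrow> ln 1) at_top"
      by (rule tendsto_ln) simp
    moreover have "ln (L (exp u * exp x) / L (exp x)) = h (x + u) - h x" for x
      unfolding h_def using Lpos[of "exp x"] Lpos[of "exp u * exp x"]
      by (simp add: ln_div exp_add mult.commute)
    ultimately show ?thesis by simp
  qed
  have l2: "ln (2::real) > 0" by simp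
  obtain X where X: "\<And>x u. x \<ge> X \<Longrightarrow> u \<in> {0..1} \<Longrightarrow> \<bar>h (x + u) - h x\<bar> \<le> ln 2"
    using uct_additive[OF hm hl l2] by blast
  obtain J :: nat where J: "real J * ln 2 \<ge> X"
    using reals_Archimedean3[OF l2] by (meson less_imp_le)
  have "L (2^j) / 2 \<le> L (real k) \<and> L (real k) \<le> 2 * L (2^j)"
    if j: "j \<ge> J" and k: "2^j \<le> k" "k \<le> 2^(j+1)" for j k
  proof -
    have kr: "(2::real)^j \<le> real k" "real k \<le> 2^(j+1)"
      using k by (metis of_nat_le_iff of_nat_numeral of_nat_power)+
    have kp: "real k > 0" using kr(1) by (smt (verit) zero_less_power)
    define x where "x = real j * ln 2"
    define u where "u = ln (real k) - x"
    have xX: "x \<ge> X" using J j unfolding x_def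
      by (smt (verit) l2 mult_right_mono of_nat_le_iff)
    have ex: "exp x = 2^j" unfolding x_def by (simp add: exp_of_nat_mult)
    have "ln (2^j) \<le> ln (real k)" using kr kp by simp
    hence u0: "u \<ge> 0" unfolding u_def x_def by (simp add: ln_realpow)
    have "ln (real k) \<le> ln (2^(j+1))" using kr kp by simp
    hence "u \<le> ln 2" unfolding u_def x_def using ln_realpow[of 2 "j+1"] by (simp add: algebra_simps)
    moreover have "ln (2::real) \<le> 1" using ln_le_minus_one[of 2] by simp
    ultimately have u1: "u \<in> {0..1}" using u0 by simp
    have "\<bar>h (x + u) - h x\<bar> \<le> ln 2" by (rule X[OF xX u1])
    moreover have "h (x + u) = ln (L (real k))" unfolding h_def u_def using kp by simp
    moreover have "h x = ln (L (2^j))" unfolding h_def ex ..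
    ultimately have d: "\<bar>ln (L (real k)) - ln (L (2^j))\<bar> \<le> ln 2" by simp
    have p1: "L (real k) > 0" "L (2^j) > 0" using kp by (auto intro!: Lpos)
    have "ln (L (real k)) \<le> ln (2 * L (2^j))" using d p1 by (simp add: ln_mult)
    hence a: "L (real k) \<le> 2 * L (2^j)" using p1 by simp
    have "ln (L (2^j) / 2) \<le> ln (L (real k))" using d p1 by (simp add: ln_div)
    hence b: "L (2^j) / 2 \<le> L (real k)" using p1 by simp
    from a b show ?thesis by simp
  qed
  thus ?thesis by blast
qed

definition beta :: "nat \<Rightarrow> real" where
  "beta j = (\<Sum>k\<in>{2^j..<2^(j+1)}. real k * mu k)"
definition piB :: "nat \<Rightarrow> real" where
  "piB j = (\<Sum>k\<in>{2^j..<2^(j+1)}. mu k)"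

lemma sum_blocks: "(\<Sum>k\<in>{2^i..<2^(i+T)}. real k * mu k) = (\<Sum>t<T. beta (i+t))"
proof (induction T)
  case 0 thus ?case by simp
next
  case (Suc T)
  have le: "(2::nat)^(i+T) \<le> 2^(i+Suc T)" "(2::nat)^i \<le> 2^(i+T)" by (auto intro: power_increasing)
  have "(\<Sum>k\<in>{2^i..<2^(i+Suc T)}. real k * mu k) =
      (\<Sum>k\<in>{2^i..<2^(i+T)}. real k * mu k) + (\<Sum>k\<in>{2^(i+T)..<2^(i+Suc T)}. real k * mu k)"
    by (rule sum.atLeastLessThan_concat[OF le(2) le(1), symmetric])
  also have "(\<Sum>k\<in>{2^(i+T)..<2^(i+Suc T)}. real k * mu k) = beta (i+T)"
    by (simp add: beta_def)
  finally show ?case using Suc by simp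
qed

lemma block_sums:
  assumes J: "\<forall>j\<ge>J. \<forall>k::nat. 2^j \<le> k \<and> k \<le> 2^(j+1) \<longrightarrow> L (2^j) / 2 \<le> L (real k) \<and> L (real k) \<le> 2 * L (2^j)"
    and j: "j \<ge> J"
  shows "L (2^j) / 4 \<le> beta j" "beta j \<le> 2 * L (2^j)" "L (2^j) / (8 * 2^j) \<le> piB j"
proof -
  have card: "card {(2::nat)^j..<2^(j+1)} = 2^j" by simp
  have kb: "L (2^j) / 2 \<le> L (real k) \<and> L (real k) \<le> 2 * L (2^j)"
     "(2::real)^j \<le> real k" "real k \<le> 2^(j+1)" "k \<ge> 1"
    if "k \<in> {2^j..<2^(j+1)}" for k
  proof -
    show "L (2^j) / 2 \<le> L (real k) \<and> L (real k) \<le> 2 * L (2^j)" using J j that by auto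
    show "(2::real)^j \<le> real k" using that by (metis atLeastLessThan_iff of_nat_le_iff of_nat_numeral of_nat_power)
    show "real k \<le> 2^(j+1)" using that
      by (metis atLeastLessThan_iff less_imp_le of_nat_le_iff of_nat_numeral of_nat_power)
    show "k \<ge> 1" using that by (metis atLeastLessThan_iff dual_order.trans one_le_numeral one_le_power)
  qed
  have Bp: "L (2^j) > 0" by (simp add: Lpos)
  {
    fix k :: nat assume k: "k \<in> {2^j..<2^(j+1)}"
    note kk = kb[OF k]
    have kpos: "real k > 0" using kk(4) by simp
    have "real k * mu k = L (real k) / real k" using kmu[OF kk(4)] .
    also have "\<dots> \<le> (2 * L (2^j)) / 2^j"
      using kk kpos Bp by (intro frac_le) auto
    finally have u: "real k * mu k \<le> 2 * L (2^j) / 2^j" .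
    have "(L (2^j) / 2) / 2^(j+1) \<le> L (real k) / real k"
      using kk kpos Bp by (intro frac_le) auto
    hence l: "L (2^j) / 2^(j+2) \<le> real k * mu k" using kmu[OF kk(4)] by (simp add: field_simps)
    have "mu k = L (real k) / (real k)^2" using muL[OF kk(4)] .
    moreover have "(L (2^j) / 2) / (2^(j+1))^2 \<le> L (real k) / (real k)^2"
      using kk kpos Bp by (intro frac_le power_mono) auto
    moreover have "(4::real)^j = 2^j * 2^j" by (simp flip: power_mult_distrib)
    ultimately have lp: "L (2^j) / (2 * 4 * 4^j) \<le> mu k"
      by (simp add: power_mult_distrib field_simps power2_eq_square)
    note u l lp
  } note each = this
  have "beta j \<le> (\<Sum>k\<in>{(2::nat)^j..<2^(j+1)}. 2 * L (2^j) / 2^j)"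
    unfolding beta_def by (rule sum_mono) (use each in auto)
  also have "\<dots> = 2 * L (2^j)" using card by simp
  finally show "beta j \<le> 2 * L (2^j)" .
  have "(\<Sum>k\<in>{(2::nat)^j..<2^(j+1)}. L (2^j) / 2^(j+2)) \<le> beta j"
    unfolding beta_def by (rule sum_mono) (use each in auto)
  moreover have "(\<Sum>k\<in>{(2::nat)^j..<2^(j+1)}. L (2^j) / (2::real)^(j+2)) = L (2^j) / 4"
    using card by (simp add: field_simps power_add)
  ultimately show "L (2^j) / 4 \<le> beta j" by simp
  have "(\<Sum>k\<in>{(2::nat)^j..<2^(j+1)}. L (2^j) / (2 * 4 * 4^j)) \<le> piB j"
    unfolding piB_def by (rule sum_mono) (use each in auto)
  moreover have "(\<Sum>k\<in>{(2::nat)^j..<2^(j+1)}. L (2^j) / (2 * 4 * (4::real)^j)) = L (2^j) / (8 * 2^j)"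
  proof -
    have "(4::real)^j = 2^j * 2^j" by (simp flip: power_mult_distrib)
    thus ?thesis using card by (simp add: field_simps)
  qed
  ultimately show "L (2^j) / (8 * 2^j) \<le> piB j" by simp
qed

end

context crit begin

lemma dyadic_ivl:
  assumes "x \<ge> 1"
  obtains i where "(2::real)^i \<le> x" "x < 2^(i+1)"
proof -
  define k where "k = nat \<lfloor>x\<rfloor>"
  have k1: "k \<ge> 1" using assms unfolding k_def by linarith
  obtain i where i: "2^i \<le> k" "k < 2^(i+1)" using ex_power_ivl1[OF _ k1, of 2] by auto
  have "real k \<le> x" "x < real k + 1" unfolding k_def using assms by linarith+
  moreover have "(2::real)^i \<le> real k" using i(1) by (metis of_nat_le_iff of_nat_numeral of_nat_power)
  moreover have "real k + 1 \<le> (2::real)^(i+1)" using i(2)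
    by (metis Suc_eq_plus1 Suc_leI of_nat_1 of_nat_add of_nat_le_iff of_nat_numeral of_nat_power)
  ultimately have "(2::real)^i \<le> x" "x < 2^(i+1)" by linarith+
  thus ?thesis using that by blast
qed

lemma key: "\<exists>X. \<forall>x\<ge>X. \<forall>n::nat. real n * tailP mu x \<le> 2 \<longrightarrow>
              tailE mu x \<le> 2 * tailE mu (2 * real n * tailE mu x)"
proof -
  obtain J1 where J1: "\<forall>j\<ge>J1. L (2^(j+1)) \<le> rho * L (2^j) \<and> L (2^j) \<le> rho * L (2^(j+1))"
    using onestep by blast
  obtain J2 where J2: "\<forall>j\<ge>J2. \<forall>k::nat. 2^j \<le> k \<and> k \<le> 2^(j+1) \<longrightarrow> L (2^j) / 2 \<le> L (real k) \<and> L (real k) \<le> 2 * L (2^j)"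
    using block_bound by blast
  have "eventually (\<lambda>R::real. 4 * (log 2 (128*R) + 1) * 2 powr ((log 2 (128*R) + 1)/4) \<le> R) at_top"
    by real_asymp
  then obtain R0 where R0: "\<And>R. R \<ge> R0 \<Longrightarrow> 4 * (log 2 (128*R) + 1) * 2 powr ((log 2 (128*R) + 1)/4) \<le> R"
    by (auto simp: eventually_at_top_linorder)
  define K where "K = nat \<lceil>8 * max R0 1\<rceil>"
  have "eventually (\<lambda>i. \<forall>t\<in>{..<K}. 1/2 < L (2^(i+t)) / L (2^i)) sequentially"
  proof (rule eventually_ball_finite)
    have h: "1/2 < (1::real)" by simp
    show "\<forall>t\<in>{..<K}. eventually (\<lambda>i. 1/2 < L (2^(i+t)) / L (2^i)) sequentially"
      using order_tendstoD(1)[OF ratio_lim h] by blast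
  qed simp
  then obtain J3 where J3: "\<And>i t. i \<ge> J3 \<Longrightarrow> t < K \<Longrightarrow> 1/2 < L (2^(i+t)) / L (2^i)"
    by (auto simp: eventually_sequentially)
  define I0 where "I0 = max J1 (max J2 J3)"
  have rho2: "rho \<le> 2" unfolding rho_def
    using powr_mono[of "1/4" 1 2] by simp
  have "tailE mu x \<le> 2 * tailE mu (2 * real n * tailE mu x)"
    if x: "x \<ge> 2^I0" and n: "real n * tailP mu x \<le> 2" for x n
  proof -
    have "x \<ge> 1" using x one_le_power[of "2::real" I0] by linarith
    then obtain i where i: "(2::real)^i \<le> x" "x < 2^(i+1)" using dyadic_ivl by blast
    have "(2::real)^I0 < 2^(i+1)" using x i by simp
    hence "I0 < i + 1" using power_strict_increasing_iff[of "2::real" I0 "i+1"] by simp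
    hence iI: "i \<ge> J1" "i \<ge> J2" "i \<ge> J3" unfolding I0_def by auto
    define B where "B = L (2^i)"
    have Bp: "B > 0" unfolding B_def by (simp add: Lpos)
    define R where "R = tailE mu (2^i) / B"
    have ER: "tailE mu (2^i) = R * B" unfolding R_def using Bp by simp
    have "tailE mu (real (2^i)) = (\<Sum>k\<in>{2^i..<2^(i+K)}. real k * mu k) + tailE mu (real (2^(i+K)))"
      by (rule E_split) (simp add: power_increasing)
    also have "\<dots> \<ge> (\<Sum>t<K. beta (i+t))" using E_pos[of "real (2^(i+K))"] by (simp add: sum_blocks)
    finally have "(\<Sum>t<K. beta (i+t)) \<le> tailE mu (2^i)" by simp
    moreover have "(\<Sum>t<K. B / 8) \<le> (\<Sum>t<K. beta (i+t))"
    proof (rule sum_mono)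
      fix t assume t: "t \<in> {..<K}"
      have "1/2 < L (2^(i+t)) / B" using J3[OF iI(3)] t unfolding B_def by simp
      hence "B / 2 < L (2^(i+t))" using Bp by (simp add: field_simps)
      moreover have "L (2^(i+t)) / 4 \<le> beta (i+t)" using block_sums(1)[OF J2, of "i+t"] iI by simp
      ultimately show "B / 8 \<le> beta (i+t)" by simp
    qed
    ultimately have "real K * B / 8 \<le> R * B" using ER by simp
    hence "real K / 8 \<le> R" using Bp by (simp add: field_simps)
    moreover have "real K \<ge> 8 * max R0 1" unfolding K_def by linarith
    ultimately have RR0: "R \<ge> R0" "R \<ge> 1" by auto
    have pP: "piB (i+1) \<le> tailP mu x" unfolding piB_def
    proof (rule P_ge_sum)
      fix k :: nat assume "k \<in> {2 ^ (i + 1)..<2 ^ (i + 1 + 1)}"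
      hence "(2::real)^(i+1) \<le> real k" by (metis atLeastLessThan_iff of_nat_le_iff of_nat_numeral of_nat_power)
      thus "x \<le> real k" using i by simp
    qed simp
    have pL: "L (2^(i+1)) / (8 * 2^(i+1)) \<le> piB (i+1)" using block_sums(3)[OF J2, of "i+1"] iI by simp
    have "B \<le> rho * L (2^(i+1))" using J1 iI unfolding B_def by auto
    moreover have "rho * L (2^(i+1)) \<le> 2 * L (2^(i+1))"
      using rho2 Lpos[of "2^(i+1)"] by (intro mult_right_mono) auto
    ultimately have "B / 2 \<le> L (2^(i+1))" by linarith
    moreover have "B / (32 * 2^i) = (B/2) / (8 * 2^(i+1))" by simp
    moreover have "(B/2) / (8 * 2^(i+1)) \<le> L (2^(i+1)) / (8 * 2^(i+1))"
      using \<open>B / 2 \<le> L (2^(i+1))\<close> by (intro divide_right_mono) auto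
    ultimately have "B / (32 * 2^i) \<le> tailP mu x" using pP pL by linarith
    hence "real n * (B / (32 * 2^i)) \<le> real n * tailP mu x" by (intro mult_left_mono) auto
    hence "real n * (B / (32 * 2^i)) \<le> 2" using n by linarith
    hence nB: "real n * B \<le> 64 * 2^i" by (simp add: field_simps)
    define W where "W = 2 * real n * tailE mu x"
    have Ex: "tailE mu x \<le> tailE mu (2^i)" using E_anti i by simp
    have "W \<le> 2 * real n * tailE mu (2^i)" unfolding W_def using Ex by (simp add: mult_left_mono)
    also have "\<dots> = 2 * R * (real n * B)" using ER by simp
    also have "\<dots> \<le> 2 * R * (64 * 2^i)" using nB RR0 by (intro mult_left_mono) auto
    finally have W1: "W \<le> 128 * R * 2^i" by simp
    define T where "T = nat \<lceil>log 2 (128 * R)\<rceil>"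
    have lg: "log 2 (128 * R) > 0" using RR0 by simp
    have T1: "real T \<ge> log 2 (128 * R)" "real T \<le> log 2 (128 * R) + 1" unfolding T_def using lg by linarith+
    have "128 * R = 2 powr (log 2 (128 * R))" using RR0 by simp
    also have "\<dots> \<le> 2 powr real T" using T1 by (intro powr_mono) auto
    also have "\<dots> = 2^T" by (simp add: powr_realpow)
    finally have "128 * R \<le> 2^T" .
    hence "128 * R * 2^i \<le> 2^T * (2::real)^i" by (intro mult_right_mono) auto
    hence "W \<le> 2^T * 2^i" using W1 by linarith
    hence W2: "W \<le> real (2^(i+T))" by (simp add: power_add mult.commute)
    have "tailE mu (real (2^i)) = (\<Sum>k\<in>{2^i..<2^(i+T)}. real k * mu k) + tailE mu (real (2^(i+T)))"
      by (rule E_split) (simp add: power_increasing)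
    hence split: "tailE mu (2^i) = (\<Sum>t<T. beta (i+t)) + tailE mu (real (2^(i+T)))"
      by (simp add: sum_blocks)
    have "(\<Sum>t<T. beta (i+t)) \<le> (\<Sum>t<T. 2 * rho^T * B)"
    proof (rule sum_mono)
      fix t assume t: "t \<in> {..<T}"
      have a: "beta (i+t) \<le> 2 * L (2^(i+t))" using block_sums(2)[OF J2, of "i+t"] iI by simp
      have b: "L (2^(i+t)) \<le> rho^t * B" using growth[OF J1 iI(1), of t] unfolding B_def by simp
      have "rho^t \<le> rho^T" using t rho_gt1 by (intro power_increasing) auto
      hence c: "rho^t * B \<le> rho^T * B" using Bp by (intro mult_right_mono) auto
      from a b c show "beta (i+t) \<le> 2 * rho^T * B" by linarith
    qed
    also have "\<dots> = 2 * real T * rho^T * B" by simp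
    finally have s1: "(\<Sum>t<T. beta (i+t)) \<le> 2 * real T * rho^T * B" .
    have "rho^T = 2 powr (real T / 4)"
      unfolding rho_def by (simp add: powr_realpow[symmetric] powr_powr)
    also have "\<dots> \<le> 2 powr ((log 2 (128*R) + 1)/4)" using T1 by (intro powr_mono) auto
    finally have "2 * real T * rho^T * B \<le> 2 * real T * 2 powr ((log 2 (128*R) + 1)/4) * B"
      using Bp by (intro mult_right_mono mult_left_mono) auto
    with s1 have "(\<Sum>t<T. beta (i+t)) \<le> 2 * real T * 2 powr ((log 2 (128*R) + 1)/4) * B"
      by linarith
    also have "\<dots> \<le> 2 * (log 2 (128 * R) + 1) * 2 powr ((log 2 (128*R) + 1)/4) * B"
      using T1 Bp by (intro mult_right_mono) auto
    also have "\<dots> \<le> (R / 2) * B"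
    proof (rule mult_right_mono)
      show "2 * (log 2 (128 * R) + 1) * 2 powr ((log 2 (128*R) + 1)/4) \<le> R / 2"
        using R0[OF RR0(1)] by (simp add: algebra_simps)
    qed (use Bp in auto)
    finally have "(\<Sum>t<T. beta (i+t)) \<le> tailE mu (2^i) / 2" using ER by simp
    hence "tailE mu (2^i) / 2 \<le> tailE mu (real (2^(i+T)))" using split by simp
    also have "\<dots> \<le> tailE mu W" by (rule E_anti[OF W2])
    finally show ?thesis using Ex unfolding W_def by simp
  qed
  thus ?thesis by blast
qed

end


lemma has_integral_inv:
  fixes a b c :: real
  assumes "0 < a" "a \<le> b"
  shows "((\<lambda>x. c / x) has_integral (c * (ln b - ln a))) {a..b}"
proof -
  have "((\<lambda>x. c / x) has_integral (c * ln b - c * ln a)) {a..b}"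
  proof (rule fundamental_theorem_of_calculus[OF assms(2)])
    fix x assume x: "x \<in> {a..b}"
    hence "x > 0" using assms by auto
    hence "((\<lambda>x. c * ln x) has_real_derivative c * (1/x)) (at x within {a..b})"
      by (auto intro!: derivative_eq_intros)
    thus "((\<lambda>x. c * ln x) has_vector_derivative c / x) (at x within {a..b})"
      by (simp add: has_real_derivative_iff_has_vector_derivative)
  qed
  thus ?thesis by (simp add: algebra_simps)
qed

context crit begin

lemma lstar_bound:
  assumes x: "x \<ge> 1"
  shows "tailE mu (2*x) / 2 \<le> lstar mu x"
proof -
  define s where "s = 1 - 1/x"
  have s0: "0 \<le> s" "s \<le> 1" unfolding s_def using x by (auto simp: field_simps)
  have sumG: "summable (\<lambda>k. mu k * s^k)"
    by (rule summable_comparison_test[OF _ summu]) (auto intro!: exI[of _ 0] simp: nonneg abs_mult s0 power_le_one mult_left_le)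
  have sG: "(\<lambda>k. mu k * s^k - mu k + real k * mu k / x) sums (Gmu mu s - 1 + 1/x)"
    unfolding Gmu_def by (intro sums_add sums_diff summable_sums[OF sumG] s1 sums_divide s2)
  have sE: "(\<lambda>k. (if 2*x \<le> real k then real k * mu k else 0) / (2*x)) sums (tailE mu (2*x) / (2*x))"
    unfolding tailE_def by (intro sums_divide summable_sums[OF sumE])
  have le: "(if 2*x \<le> real k then real k * mu k else 0) / (2*x) \<le> mu k * s^k - mu k + real k * mu k / x" for k
  proof -
    have bern: "1 + real k * (-1/x) \<le> (1 + (-1/x))^k"
      by (rule Bernoulli_inequality) (use x in \<open>simp add: field_simps\<close>)
    hence b: "1 - real k / x \<le> s^k" unfolding s_def by simp
    have eq: "mu k * s^k - mu k + real k * mu k / x = mu k * (s^k - 1 + real k / x)" by (simp add: algebra_simps)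
    show ?thesis
    proof (cases "2*x \<le> real k")
      case True
      have "real k / (2*x) \<le> s^k - 1 + real k / x"
      proof -
        have "1 \<le> real k / (2*x)" using True x by (simp add: field_simps)
        moreover have "0 \<le> s^k" using s0 by simp
        moreover have "real k / x = 2 * (real k / (2*x))" using x by (simp add: field_simps)
        ultimately show ?thesis by linarith
      qed
      hence "mu k * (real k / (2*x)) \<le> mu k * (s^k - 1 + real k / x)" by (intro mult_left_mono nonneg)
      thus ?thesis using True eq by (simp add: field_simps)
    next
      case False
      have "0 \<le> mu k * (s^k - 1 + real k / x)" using b nonneg[of k] by (intro mult_nonneg_nonneg) auto
      thus ?thesis using False eq by simp
    qed
  qed
  have "tailE mu (2*x) / (2*x) \<le> Gmu mu s - 1 + 1/x" by (rule sums_le[OF le sE sG])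
  hence "x * (tailE mu (2*x) / (2*x)) \<le> x * (Gmu mu s - 1 + 1/x)" using x by (intro mult_left_mono) auto
  thus ?thesis using x unfolding lstar_def s_def by simp
qed

lemma V_bound:
  assumes y: "y \<ge> 1"
  shows "0 \<le> Vfun mu y \<and> Vfun mu y \<le> 2 * ln y / tailE mu (2*y)"
proof -
  define F where "F x = 1 / (x * lstar mu x)" for x
  define c where "c = 2 / tailE mu (2*y)"
  have Ep: "tailE mu (2*y) > 0" by (rule E_pos)
  have c0: "c > 0" unfolding c_def using Ep by simp
  have Fb: "0 \<le> F x \<and> F x \<le> c / x" if x: "x \<in> {1..y}" for x
  proof -
    have x1: "x \<ge> 1" "x \<le> y" using x by auto
    have "tailE mu (2*y) \<le> tailE mu (2*x)" using x1 by (intro E_anti) auto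
    also have "\<dots> / 2 \<le> lstar mu x" by (rule lstar_bound[OF x1(1)])
    finally have l: "tailE mu (2*y) / 2 \<le> lstar mu x" by simp
    hence lp: "lstar mu x > 0" using Ep by linarith
    have "F x = (1 / x) * (1 / lstar mu x)" unfolding F_def by simp
    also have "\<dots> \<le> (1/x) * (1 / (tailE mu (2*y) / 2))"
      using l lp Ep x1 by (intro mult_left_mono divide_left_mono) auto
    also have "\<dots> = c / x" unfolding c_def by simp
    finally show ?thesis using lp x1 unfolding F_def by simp
  qed
  have cint: "((\<lambda>x. c / x) has_integral (c * (ln y - ln 1))) {1..y}"
    by (rule has_integral_inv) (use y in auto)
  show ?thesis
  proof (cases "F integrable_on {1..y}")
    case True
    have "0 \<le> integral {1..y} F" by (rule integral_nonneg[OF True]) (use Fb in auto)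
    moreover have "integral {1..y} F \<le> integral {1..y} (\<lambda>x. c / x)"
      by (rule integral_le[OF True]) (use cint Fb in auto)
    moreover have "integral {1..y} (\<lambda>x. c / x) = c * ln y" using cint by (simp add: integral_unique)
    ultimately show ?thesis unfolding Vfun_def F_def[symmetric] c_def by simp
  next
    case False
    hence "Vfun mu y = 0" unfolding Vfun_def F_def[symmetric] by (rule not_integrable_integral)
    moreover have "0 \<le> 2 * ln y / tailE mu (2*y)" using y Ep by simp
    ultimately show ?thesis by simp
  qed
qed

lemma V_small: "y < 1 \<Longrightarrow> Vfun mu y = 0"
  unfolding Vfun_def by simp

lemma hint:
  assumes T: "T \<ge> 1"
  shows "(\<lambda>x. 1 / (x * tailE mu x)) integrable_on {1..T}"
proof -
  have "mono (\<lambda>x. - tailE mu x)" by (auto intro!: monoI E_anti)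
  hence "(\<lambda>x. - tailE mu x) \<in> borel_measurable borel" by (rule borel_measurable_mono)
  hence Em: "tailE mu \<in> borel_measurable borel"
    using borel_measurable_uminus[of "\<lambda>x. - tailE mu x" borel] by simp
  have Fm: "(\<lambda>x. 1 / (x * tailE mu x)) \<in> borel_measurable borel" using Em by measurable
  hence Fm2: "(\<lambda>x. 1 / (x * tailE mu x)) \<in> borel_measurable (lebesgue_on {1..T})"
    by (intro measurable_restrict_space1 measurable_completion) simp
  show ?thesis
  proof (rule measurable_bounded_by_integrable_imp_integrable_real[OF Fm2])
    show "(\<lambda>x. 1 / tailE mu T) integrable_on {1..T}" by (rule integrable_const_ivl)
    fix x assume x: "x \<in> {1..T}"
    have ET: "tailE mu T \<le> tailE mu x" using x by (intro E_anti) auto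
    have ETp: "tailE mu T > 0" by (rule E_pos)
    have Ex: "tailE mu x > 0" by (rule E_pos)
    have x1: "x \<ge> 1" using x by auto
    have "x * tailE mu x \<ge> 1 * tailE mu x" using x1 Ex by (intro mult_right_mono) auto
    hence xE: "x * tailE mu x \<ge> tailE mu T" using ET by linarith
    have "1 / (x * tailE mu x) \<le> 1 / tailE mu T"
      using xE ETp by (intro divide_left_mono) auto
    moreover have "0 < x * tailE mu x" using x1 Ex by simp
    ultimately show "\<bar>1 / (x * tailE mu x)\<bar> \<le> 1 / tailE mu T" by simp
  qed simp
qed

lemma h_lower:
  assumes M: "M > 0" and x0: "x0 \<ge> 1" and Ex0: "\<And>x. x \<ge> x0 \<Longrightarrow> tailE mu x \<le> 1 / M"
    and T: "T \<ge> x0"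
  shows "M * (ln T - ln x0) \<le> integral {1..T} (\<lambda>x. 1 / (x * tailE mu x))"
proof -
  define F where "F x = 1 / (x * tailE mu x)" for x
  have T1: "T \<ge> 1" using x0 T by simp
  have I1: "F integrable_on {1..T}" unfolding F_def by (rule hint[OF T1])
  have I2: "F integrable_on {x0..T}"
    by (rule integrable_on_subinterval[OF I1]) (use x0 in auto)
  have Fnn: "0 \<le> F x" if "x \<ge> 1" for x using that E_pos[of x] unfolding F_def by simp
  have "integral {x0..T} F \<le> integral {1..T} F"
    by (rule integral_subset_le[OF _ I2 I1]) (use x0 Fnn in auto)
  moreover have "integral {x0..T} (\<lambda>x. M / x) \<le> integral {x0..T} F"
  proof (rule integral_le[OF _ I2])
    show "(\<lambda>x. M / x) integrable_on {x0..T}"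
      using has_integral_inv[of x0 T M] x0 T by (auto intro: has_integral_integrable)
    fix x assume x: "x \<in> {x0..T}"
    have Ex: "tailE mu x \<le> 1 / M" "tailE mu x > 0" using Ex0 x E_pos by auto
    have xp: "x > 0" using x x0 by auto
    have "M * tailE mu x \<le> 1" using Ex M by (simp add: field_simps)
    hence "M * (x * tailE mu x) \<le> x" using xp by (simp add: algebra_simps mult_left_le)
    thus "M / x \<le> F x" unfolding F_def using xp Ex by (simp add: field_simps)
  qed
  moreover have "integral {x0..T} (\<lambda>x. M / x) = M * (ln T - ln x0)"
    using has_integral_inv[of x0 T M] x0 T by (simp add: integral_unique)
  ultimately show ?thesis unfolding F_def by simp
qed

end

context crit begin

lemma P_lower: "\<exists>c>0. \<exists>Y\<ge>1. \<forall>y\<ge>Y. c / y^3 \<le> tailP mu y"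
proof -
  obtain J1 where J1: "\<forall>j\<ge>J1. L (2^(j+1)) \<le> rho * L (2^j) \<and> L (2^j) \<le> rho * L (2^(j+1))"
    using onestep by blast
  have rho2: "rho \<le> 2" unfolding rho_def using powr_mono[of "1/4" 1 2] by simp
  define c where "c = L (2^J1) / 8"
  have c0: "c > 0" unfolding c_def by (simp add: Lpos)
  have "c / y^3 \<le> tailP mu y" if y: "y \<ge> 2^J1" for y
  proof -
    have "y \<ge> 1" using y one_le_power[of "2::real" J1] by linarith
    then obtain i where i: "(2::real)^i \<le> y" "y < 2^(i+1)" using dyadic_ivl by blast
    have "(2::real)^J1 < 2^(i+1)" using y i by simp
    hence "J1 < i + 1" using power_strict_increasing_iff[of "2::real" J1 "i+1"] by simp
    define t where "t = i + 1 - J1"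
    have t: "J1 + t = i + 1" "t \<le> i + 1" unfolding t_def using \<open>J1 < i + 1\<close> by auto
    define z :: real where "z = 2^(i+1)"
    have z: "y \<le> z" "z \<le> 2 * y" "z > 0" unfolding z_def using i by auto
    have "L (2^J1) \<le> rho^t * L (2^(J1+t))" using growth[OF J1, of J1 t] by simp
    also have "\<dots> = rho^t * L z" using t(1) by (simp add: z_def)
    also have "\<dots> \<le> z * L z"
    proof (rule mult_right_mono)
      have "rho^t \<le> 2^t" using rho2 rho_gt1 by (intro power_mono) auto
      also have "(2::real)^t \<le> 2^(i+1)" using t by (intro power_increasing) auto
      finally show "rho^t \<le> z" unfolding z_def .
    qed (use Lpos[OF z(3)] in auto)
    finally have Lz: "L (2^J1) \<le> z * L z" .
    have "mu (2^(i+1)) = L z / z^2" using muL[of "2^(i+1)"] unfolding z_def by simp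
    have "(\<Sum>k\<in>{2^(i+1)}. mu k) \<le> tailP mu y"
      by (rule P_ge_sum) (use z in \<open>auto simp: z_def\<close>)
    hence Pz: "L z / z^2 \<le> tailP mu y" using \<open>mu (2^(i+1)) = L z / z^2\<close> by simp
    have "c / y^3 = L (2^J1) / (2*y)^3" unfolding c_def by (simp add: power_mult_distrib)
    also have "\<dots> \<le> L (2^J1) / z^3" using z by (intro divide_left_mono power_mono) (auto simp: less_imp_le[OF Lpos])
    also have "\<dots> \<le> (z * L z) / z^3" using Lz z by (intro divide_right_mono) auto
    also have "\<dots> = L z / z^2" using z by (simp add: power2_eq_square power3_eq_cube)
    finally show ?thesis using Pz by linarith
  qed
  moreover have "(2::real)^J1 \<ge> 1" by simp
  ultimately show ?thesis using c0 by blast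
qed

lemma bseq_bound:
  assumes A: "a n \<ge> 1"
  shows "0 \<le> bseq mu a n \<and> bseq mu a n \<le> real n * tailE mu (a n)"
proof -
  define g where "g k = (if \<bar>real k - 1\<bar> > a n then (real k - 1) * mu k else 0)" for k
  have gb: "0 \<le> g k \<and> g k \<le> (if a n \<le> real k then real k * mu k else 0)" for k
  proof (cases "\<bar>real k - 1\<bar> > a n")
    case True
    hence k: "real k - 1 > a n" using A by (cases k) auto
    thus ?thesis using True nonneg[of k] A unfolding g_def by (auto intro: mult_right_mono mult_nonneg_nonneg)
  next
    case False thus ?thesis unfolding g_def using nonneg[of k] by auto
  qed
  have sg: "summable g" by (rule summable_comparison_test[OF _ sumE[of "a n"]]) (use gb in auto)
  have "0 \<le> suminf g" by (rule suminf_nonneg[OF sg]) (use gb in auto)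
  moreover have "suminf g \<le> tailE mu (a n)" unfolding tailE_def
    by (rule suminf_le[OF _ sg sumE]) (use gb in auto)
  ultimately show ?thesis unfolding bseq_def g_def[symmetric] by (auto intro: mult_left_mono)
qed

end


theorem mainTheorem11:
  fixes mu :: "nat \<Rightarrow> real" and a :: "nat \<Rightarrow> real"
  assumes "H_mu mu"
    and "(\<lambda>n. real n * tailP mu (a n)) \<longlonglongrightarrow> 1"
  shows "filterlim (\<lambda>n. hseq mu a n / ln (real n)) at_top sequentially \<and>
         (\<lambda>n. bseq mu a n * Vfun mu (bseq mu a n)) \<in> O(\<lambda>n. real n * ln (real n))"
proof -
  from assms(1) obtain L where "slowly_varying L" "\<forall>n\<ge>1. mu n = L (real n) / (real n)^2"
    and m: "\<forall>k. mu k \<ge> 0" "mu sums 1" "(\<lambda>k. real k * mu k) sums 1"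
    unfolding H_mu_def by blast
  then interpret crit mu L by unfold_locales auto
  note lim = assms(2)
  have ev12: "eventually (\<lambda>n. 1/2 \<le> real n * tailP mu (a n) \<and> real n * tailP mu (a n) \<le> 2) sequentially"
  proof -
    have h1: "(1/2::real) < 1" and h2: "(1::real) < 2" by simp_all
    show ?thesis using eventually_conj[OF order_tendstoD(1)[OF lim h1] order_tendstoD(2)[OF lim h2]]
      by eventually_elim auto
  qed
  obtain c Y where c: "c > 0" "Y \<ge> 1" and cY: "\<And>y. y \<ge> Y \<Longrightarrow> c / y^3 \<le> tailP mu y"
    using P_lower by blast
  have big_a: "eventually (\<lambda>n. a n \<ge> real n powr (1/4)) sequentially"
  proof -
    have e1: "eventually (\<lambda>n. 2 / real n < c / (real n powr (1/4))^3) sequentially"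
      using c(1) by real_asymp
    have e2: "eventually (\<lambda>n. Y \<le> real n powr (1/4)) sequentially" by real_asymp
    show ?thesis using e1 e2 ev12 eventually_gt_at_top[of 0]
    proof eventually_elim
      case (elim n)
      show ?case
      proof (rule ccontr)
        assume "\<not> ?case"
        hence "a n \<le> real n powr (1/4)" by simp
        hence "tailP mu (real n powr (1/4)) \<le> tailP mu (a n)" by (rule P_anti)
        moreover have "c / (real n powr (1/4))^3 \<le> tailP mu (real n powr (1/4))" using cY elim by blast
        ultimately have "2 / real n < tailP mu (a n)" using elim by linarith
        hence "real n * (2 / real n) < real n * tailP mu (a n)" using elim by (intro mult_strict_left_mono) auto
        thus False using elim by simp
      qed
    qed
  qed
  have a_inf: "eventually (\<lambda>n. a n \<ge> X) sequentially" for X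
  proof -
    have "eventually (\<lambda>n. X \<le> real n powr (1/4)) sequentially" by real_asymp
    thus ?thesis using big_a by eventually_elim auto
  qed
  have part1: "filterlim (\<lambda>n. hseq mu a n / ln (real n)) at_top sequentially"
    unfolding filterlim_at_top
  proof
    fix Z :: real
    define M where "M = max Z 1"
    have M0: "M > 0" unfolding M_def by simp
    have "eventually (\<lambda>x. tailE mu x < 1 / (10 * M)) at_top"
      using order_tendstoD(2)[OF E_lim0] M0 by simp
    then obtain x1 where x1: "\<And>x. x \<ge> x1 \<Longrightarrow> tailE mu x < 1 / (10 * M)"
      by (auto simp: eventually_at_top_linorder)
    define x0 where "x0 = max x1 1"
    have x0: "x0 \<ge> 1" "\<And>x. x \<ge> x0 \<Longrightarrow> tailE mu x \<le> 1 / (10 * M)"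
      unfolding x0_def using x1 by (auto intro: less_imp_le)
    have e3: "eventually (\<lambda>n. real n powr (1/5) \<le> real n powr (1/4) / 2) sequentially" by real_asymp
    have e4: "eventually (\<lambda>n. x0 \<le> real n powr (1/5)) sequentially" by real_asymp
    have e5: "eventually (\<lambda>n. max (10 * ln x0) 1 \<le> ln (real n)) sequentially" by real_asymp
    show "eventually (\<lambda>n. Z \<le> hseq mu a n / ln (real n)) sequentially"
      using ev12 big_a e3 e4 e5 eventually_gt_at_top[of 0]
    proof eventually_elim
      case (elim n)
      define T where "T = real n * tailE mu (a n)"
      have np: "real n > 0" using elim by simp
      have an: "a n \<ge> 0" using elim by (smt (verit) powr_ge_zero)
      have "real n * (a n * tailP mu (a n)) \<le> T"
        unfolding T_def using E_ge_xP[OF an] np by (intro mult_left_mono) auto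
      moreover have "a n * (1/2) \<le> a n * (real n * tailP mu (a n))"
        using elim an by (intro mult_left_mono) auto
      ultimately have "a n / 2 \<le> T" by (simp add: algebra_simps)
      hence T5: "real n powr (1/5) \<le> T" using elim by linarith
      hence Tx0: "T \<ge> x0" using elim by linarith
      have "10 * M * (ln T - ln x0) \<le> hseq mu a n"
        unfolding hseq_def T_def[symmetric] by (rule h_lower[OF _ x0 Tx0]) (use M0 in auto)
      moreover have lnT: "ln (real n) / 5 \<le> ln T"
      proof -
        have pp: "real n powr (1/5) > 0" using np by simp
        have "ln (real n powr (1/5)) \<le> ln T" using T5 pp less_le_trans[OF pp T5] by (subst ln_le_cancel_iff) auto
        thus ?thesis using np by (simp add: ln_powr)
      qed
      moreover have "10 * M * (ln (real n) / 5 - ln x0) \<le> 10 * M * (ln T - ln x0)"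
        using M0 \<open>ln (real n) / 5 \<le> ln T\<close> by (intro mult_left_mono) auto
      ultimately have "10 * M * (ln (real n) / 5 - ln x0) \<le> hseq mu a n" by linarith
      hence "M * ln (real n) + M * (ln (real n) - 10 * ln x0) \<le> hseq mu a n"
        by (simp add: algebra_simps)
      moreover have "0 \<le> M * (ln (real n) - 10 * ln x0)" using elim M0 by simp
      ultimately have "M * ln (real n) \<le> hseq mu a n" by linarith
      moreover have lnp: "ln (real n) > 0" using elim by linarith
      ultimately have "M \<le> hseq mu a n / ln (real n)" by (simp add: field_simps)
      thus ?case unfolding M_def by linarith
    qed
  qed
  obtain X where X: "\<And>x n. x \<ge> X \<Longrightarrow> real n * tailP mu x \<le> 2 \<Longrightarrow>
              tailE mu x \<le> 2 * tailE mu (2 * real n * tailE mu x)"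
    using key by blast
  have part2: "(\<lambda>n. bseq mu a n * Vfun mu (bseq mu a n)) \<in> O(\<lambda>n. real n * ln (real n))"
  proof (rule bigoI[where c=4])
    show "eventually (\<lambda>n. norm (bseq mu a n * Vfun mu (bseq mu a n)) \<le> 4 * norm (real n * ln (real n))) sequentially"
      using ev12 a_inf[of "max X 1"] eventually_gt_at_top[of 0]
    proof eventually_elim
      case (elim n)
      define b where "b = bseq mu a n"
      define T where "T = real n * tailE mu (a n)"
      have np: "real n \<ge> 1" using elim by simp
      have lnn: "ln (real n) \<ge> 0" using np by simp
      have a1: "a n \<ge> 1" using elim by simp
      have b0: "0 \<le> b" "b \<le> T" using bseq_bound[of a n, OF a1] unfolding b_def T_def by auto
      have Tn: "T \<le> real n" unfolding T_def using E_le1[of "a n"] np by (simp add: mult_left_le)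
      have kk: "tailE mu (a n) \<le> 2 * tailE mu (2 * T)"
        using X[of "a n" n] elim unfolding T_def by (simp add: mult.assoc)
      have E2T: "tailE mu (2 * T) > 0" by (rule E_pos)
      have rhs: "4 * norm (real n * ln (real n)) = 4 * real n * ln (real n)" using np lnn by simp
      show ?case
      proof (cases "b < 1")
        case True
        thus ?thesis using V_small[OF True] rhs np lnn unfolding b_def by simp
      next
        case False
        hence b1: "b \<ge> 1" by simp
        have V: "0 \<le> Vfun mu b" "Vfun mu b \<le> 2 * ln b / tailE mu (2*b)" using V_bound[OF b1] by auto
        have E2b: "tailE mu (2 * T) \<le> tailE mu (2 * b)" using b0 by (intro E_anti) auto
        have lnb: "0 \<le> ln b" "ln b \<le> ln (real n)" using b1 b0 Tn by auto
        have "2 * ln b / tailE mu (2*b) \<le> 2 * ln (real n) / tailE mu (2*T)"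
          using lnb E2b E2T by (intro frac_le) auto
        hence "b * Vfun mu b \<le> T * (2 * ln (real n) / tailE mu (2*T))"
          using V b0 b1 by (intro mult_mono) auto
        also have "\<dots> = 2 * ln (real n) * real n * (tailE mu (a n) / tailE mu (2*T))"
          unfolding T_def by (simp add: field_simps)
        also have "\<dots> \<le> 2 * ln (real n) * real n * 2"
        proof (rule mult_left_mono)
          show "tailE mu (a n) / tailE mu (2*T) \<le> 2" using kk E2T by (simp add: field_simps)
        qed (use lnn np in auto)
        finally have "b * Vfun mu b \<le> 4 * real n * ln (real n)" by (simp add: mult_ac)
        moreover have "0 \<le> b * Vfun mu b" using b0 V by simp
        ultimately show ?thesis using rhs unfolding b_def by simp
      qed
    qed
  qed
  from part1 part2 show ?thesis ..
qed
end
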